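(* Let $n\geq1$, $\eta\in\Omega$ and $u,v\in\mathbb N^2$. Then: (1) if $u\neq v$ then $\bar u\neq\bar v$; (2) $|\overline{T_\eta}|=\lambda_{2,n}$; (3) if $v_{j,\eta}=(l,0)$ or $v_{j,\eta}=(0,l)$, then $l\leq j$; (4) $\pi_i(w)\leq n$ for all $w\in T_\eta$ and $i\in\{1,2\}$; (5) if $v_{j,\eta}=(0,p)$, then for every $q$ with $1\leq q<p$ there exists $l<j$ with $v_{l,\eta}=(0,q)$; if $v_{j,\eta}=(p,0)$, then for every $q$ with $1\leq q<p$ there exists $l<j$ with $v_{l,\eta}=(q,0)$; (6) if $v_{j,\eta}=(0,l)$ then $\{v_{i,\eta}\}_{i=1}^j=\{(0,t)\}_{t=1}^l\cup\{(s,0)\}_{s=1}^{j-l}$, and if $v_{j,\eta}=(l,0)$ then $\{v_{i,\eta}\}_{i=1}^j=\{(0,t)\}_{t=1}^{j-l}\cup\{(s,0)\}_{s=1}^l$.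
   Context: $\pi_i$ denotes the $i$-th coordinate. $\Lambda_{2,n}=\{\alpha\in\mathbb N^2:1\leq\alpha_1+\alpha_2\leq n\}$, $\lambda_{2,n}=|\Lambda_{2,n}|=\binom{n+2}{2}-1$; $\bar v=\big(\binom{v_1}{\alpha_1}\binom{v_2}{\alpha_2}\big)_{\alpha\in\Lambda_{2,n}}$. $\Omega$ is the set of $\eta=(z,d_0,\ldots,d_r)$ with $z\in\{0,1\}$, $d_0=0$, $d_i\geq1$ ($1\leq i\leq r$), $\sum_{i=0}^rd_i=n$. For $j\in\{1,\ldots,n\}$, $t\in\{1,\ldots,r\}$ is unique with $\sum_{i=0}^{t-1}d_i<j\leq\sum_{i=0}^td_i$ and $c=j-\sum_{i=0}^{t-1}d_i$; $v_{j,\eta}=(\sum_{i\text{ odd},i<t}d_i+c,0)$ if $z=1,t$ odd; $(0,\sum_{i\text{ even},i<t}d_i+c)$ if $z=1,t$ even; $(0,\sum_{i\text{ odd},i<t}d_i+c)$ if $z=0,t$ odd; $(\sum_{i\text{ even},i<t}d_i+c,0)$ if $z=0,t$ even. $T_{j,\eta}=\{v_{j,\eta}+p(1,1):0\leq p\leq n-j\}$ ($1\leq j\leq n$), $T_{0,\eta}=\{(p,p):1\leq p\leq n\}$, $T_\eta=\bigcup_{j=0}^nT_{j,\eta}$, $\overline{T_\eta}=\{\bar w:w\in T_\eta\}$. *)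

theory Defs
  imports Main
begin

text \<open>Points of N^2 are pairs of naturals; pi_1 = fst, pi_2 = snd.\<close>

definition Lambda2 :: "nat \<Rightarrow> (nat \<times> nat) set" where
  "Lambda2 n = {\<alpha>. 1 \<le> fst \<alpha> + snd \<alpha> \<and> fst \<alpha> + snd \<alpha> \<le> n}"

definition lambda2 :: "nat \<Rightarrow> nat" where
  "lambda2 n = card (Lambda2 n)"

definition vbar :: "nat \<Rightarrow> nat \<times> nat \<Rightarrow> (nat \<times> nat \<Rightarrow> nat)" where
  "vbar n v = (\<lambda>\<alpha>. if \<alpha> \<in> Lambda2 n
                    then (fst v choose fst \<alpha>) * (snd v choose snd \<alpha>) else 0)"

definition Omega :: "nat \<Rightarrow> (nat \<times> nat list) set" where
  "Omega n = {(z, d). z \<in> {0, 1} \<and> d \<noteq> [] \<and> d ! 0 = 0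
              \<and> (\<forall>i. 1 \<le> i \<and> i < length d \<longrightarrow> 1 \<le> d ! i)
              \<and> sum_list d = n}"

definition psum :: "nat list \<Rightarrow> nat \<Rightarrow> nat" where
  "psum d t = (\<Sum>i<t. d ! i)"

definition tidx :: "nat list \<Rightarrow> nat \<Rightarrow> nat" where
  "tidx d j = (THE t. 1 \<le> t \<and> t < length d \<and> psum d t < j \<and> j \<le> psum d (Suc t))"

definition oddsum :: "nat list \<Rightarrow> nat \<Rightarrow> nat" where
  "oddsum d t = (\<Sum>i\<in>{i. i < t \<and> odd i}. d ! i)"

definition evensum :: "nat list \<Rightarrow> nat \<Rightarrow> nat" where
  "evensum d t = (\<Sum>i\<in>{i. i < t \<and> even i}. d ! i)"

definition vj :: "nat \<Rightarrow> nat \<times> nat list \<Rightarrow> nat \<times> nat" where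
  "vj j \<eta> = (let z = fst \<eta>; d = snd \<eta>; t = tidx d j; c = j - psum d t in
     if z = 1 then
       (if odd t then (oddsum d t + c, 0) else (0, evensum d t + c))
     else
       (if odd t then (0, oddsum d t + c) else (evensum d t + c, 0)))"

definition Tj :: "nat \<Rightarrow> nat \<Rightarrow> nat \<times> nat list \<Rightarrow> (nat \<times> nat) set" where
  "Tj n j \<eta> = (if j = 0 then {(p, p) | p. 1 \<le> p \<and> p \<le> n}
               else {(fst (vj j \<eta>) + p, snd (vj j \<eta>) + p) | p. p \<le> n - j})"

definition Teta :: "nat \<Rightarrow> nat \<times> nat list \<Rightarrow> (nat \<times> nat) set" where
  "Teta n \<eta> = (\<Union>j\<in>{0..n}. Tj n j \<eta>)"

end

theory Submission
  imports Defs
begin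

fun cnt :: "(nat \<Rightarrow> bool) \<Rightarrow> nat \<Rightarrow> nat" where
  "cnt s 0 = 0"
| "cnt s (Suc j) = cnt s j + (if s (Suc j) then 1 else 0)"

lemma cnt_le: "cnt s j \<le> j" by (induct j) auto
lemma cnt_mono: "i \<le> j \<Longrightarrow> cnt s i \<le> cnt s j"
  by (induct j) (auto simp: le_Suc_eq)
lemma cnt_sum: "cnt s j + cnt (\<lambda>i. \<not> s i) j = j" by (induct j) auto
lemma cnt_pos: "s j \<Longrightarrow> 1 \<le> j \<Longrightarrow> 1 \<le> cnt s j"
  by (cases j) auto
lemma cnt_strict: "i < j \<Longrightarrow> s j \<Longrightarrow> cnt s i < cnt s j"
proof (cases j)
  case (Suc k)
  assume "i < j" "s j"
  then have "cnt s i \<le> cnt s k" using Suc by (intro cnt_mono) auto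
  then show ?thesis using Suc \<open>s j\<close> by simp
qed auto
lemma cnt_ivt: "1 \<le> q \<Longrightarrow> q \<le> cnt s j \<Longrightarrow> \<exists>i. 1 \<le> i \<and> i \<le> j \<and> s i \<and> cnt s i = q"
proof (induct j)
  case (Suc j)
  show ?case
  proof (cases "q \<le> cnt s j")
    case True then show ?thesis using Suc by (metis le_SucI)
  next
    case False
    then have "s (Suc j)" "cnt s (Suc j) = q" using Suc.prems by (auto split: if_splits)
    then show ?thesis by auto
  qed
qed simp

definition gv :: "(nat \<Rightarrow> bool) \<Rightarrow> nat \<Rightarrow> nat \<times> nat" where
  "gv s j = (if s j then (cnt s j, 0) else (0, cnt (\<lambda>i. \<not> s i) j))"

lemma gv_inj: assumes "1 \<le> i" "1 \<le> j" "gv s i = gv s j" shows "i = j"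
proof (rule ccontr)
  assume ne: "i \<noteq> j"
  have p1: "1 \<le> cnt s i" if "s i" using cnt_pos[of s i] that assms(1) by blast
  have p2: "1 \<le> cnt (\<lambda>i. \<not> s i) i" if "\<not> s i" using cnt_pos[of "\<lambda>i. \<not> s i" i] that assms(1) by blast
  have p3: "1 \<le> cnt s j" if "s j" using cnt_pos[of s j] that assms(2) by blast
  have p4: "1 \<le> cnt (\<lambda>i. \<not> s i) j" if "\<not> s j" using cnt_pos[of "\<lambda>i. \<not> s i" j] that assms(2) by blast
  have "i < j \<or> j < i" using ne by auto
  then show False
  proof
    assume "i < j"
    then have "s j \<Longrightarrow> cnt s i < cnt s j" "\<not> s j \<Longrightarrow> cnt (\<lambda>i. \<not> s i) i < cnt (\<lambda>i. \<not> s i) j"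
      by (auto intro: cnt_strict)
    then show False using assms(3) p1 p2 p3 p4 unfolding gv_def by (auto split: if_splits)
  next
    assume "j < i"
    then have "s i \<Longrightarrow> cnt s j < cnt s i" "\<not> s i \<Longrightarrow> cnt (\<lambda>i. \<not> s i) j < cnt (\<lambda>i. \<not> s i) i"
      by (auto intro: cnt_strict)
    then show False using assms(3) p1 p2 p3 p4 unfolding gv_def by (auto split: if_splits)
  qed
qed

lemma gv_le: "fst (gv s j) \<le> j \<and> snd (gv s j) \<le> j"
  unfolding gv_def using cnt_le[of s j] cnt_le[of "\<lambda>i. \<not> s i" j] by auto

lemma gv_axis: "1 \<le> j \<Longrightarrow> (fst (gv s j) = 0 \<and> 1 \<le> snd (gv s j)) \<or> (snd (gv s j) = 0 \<and> 1 \<le> fst (gv s j))"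
  unfolding gv_def using cnt_pos[of s j] cnt_pos[of "\<lambda>i. \<not> s i" j] by auto

definition SP :: "nat list \<Rightarrow> (nat \<Rightarrow> bool) \<Rightarrow> nat \<Rightarrow> nat" where
  "SP d P t = (\<Sum>k<t. if P k then d ! k else 0)"

lemma psum_mono: "a \<le> b \<Longrightarrow> psum d a \<le> psum d b"
  unfolding psum_def by (rule sum_mono2) auto
lemma psum_Suc: "psum d (Suc t) = psum d t + d ! t"
  unfolding psum_def by simp
lemma SP_Suc: "SP d P (Suc t) = SP d P t + (if P t then d ! t else 0)"
  unfolding SP_def by simp

locale dl =
  fixes d :: "nat list" and n :: nat
  assumes ne: "d \<noteq> []" and d0: "d ! 0 = 0"
    and dpos: "\<forall>i. 1 \<le> i \<and> i < length d \<longrightarrow> 1 \<le> d ! i" and sm: "sum_list d = n"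
begin

lemma psum_len: "psum d (length d) = n"
  using sm unfolding psum_def by (simp add: sum_list_sum_nth atLeast0LessThan)

lemma psum1: "psum d 1 = 0" unfolding psum_def using d0 by simp

lemma psum_strict: "1 \<le> a \<Longrightarrow> a < b \<Longrightarrow> b \<le> length d \<Longrightarrow> psum d a < psum d b"
proof -
  assume h: "1 \<le> a" "a < b" "b \<le> length d"
  have "psum d a \<le> psum d (b - 1)" using h by (intro psum_mono) auto
  moreover have "psum d b = psum d (b - 1) + d ! (b - 1)" using psum_Suc[of d "b - 1"] h by simp
  moreover have "1 \<le> b - 1" "b - 1 < length d" using h by auto
  then have "1 \<le> d ! (b - 1)" using dpos by blast
  ultimately show ?thesis by linarith
qed

lemma tidx_unique:
  assumes "1 \<le> t" "t < length d" "psum d t < j" "j \<le> psum d (Suc t)"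
  shows "tidx d j = t"
  unfolding tidx_def
proof (rule the_equality)
  fix t' assume h: "1 \<le> t' \<and> t' < length d \<and> psum d t' < j \<and> j \<le> psum d (Suc t')"
  show "t' = t"
  proof (rule ccontr)
    assume "t' \<noteq> t"
    then have "Suc t \<le> t' \<or> Suc t' \<le> t" by auto
    then show False
      using psum_mono[of "Suc t" t' d] psum_mono[of "Suc t'" t d] h assms by auto
  qed
qed (use assms in auto)

lemma tidx_exists:
  assumes "1 \<le> j" "j \<le> n"
  shows "1 \<le> tidx d j \<and> tidx d j < length d \<and> psum d (tidx d j) < j \<and> j \<le> psum d (Suc (tidx d j))"
proof -
  define t where "t = (LEAST t. j \<le> psum d (Suc t))"
  have L: "Suc (length d - 1) = length d" using ne by simp
  have ex: "j \<le> psum d (Suc (length d - 1))" using L psum_len assms by simp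
  have t1: "j \<le> psum d (Suc t)" unfolding t_def by (rule LeastI[of "\<lambda>t. j \<le> psum d (Suc t)", OF ex])
  have t2: "t \<le> length d - 1" unfolding t_def by (rule Least_le[of "\<lambda>t. j \<le> psum d (Suc t)", OF ex])
  have t0: "t \<noteq> 0" using t1 psum1 assms by (cases t) auto
  then obtain t' where t': "t = Suc t'" by (cases t) auto
  have "\<not> j \<le> psum d (Suc t')" using t' unfolding t_def
    by (metis t_def lessI not_less_Least)
  then have t3: "psum d t < j" using t' by simp
  have "1 \<le> t" "t < length d" using t0 t2 ne by (auto simp: Suc_le_eq)
  then have "tidx d j = t" using tidx_unique t1 t3 by auto
  then show ?thesis using t1 t3 \<open>1 \<le> t\<close> \<open>t < length d\<close> by simp
qed

lemma block:
  "j \<le> n \<Longrightarrow> 1 \<le> t \<Longrightarrow> t < length d \<Longrightarrow> psum d t \<le> j \<Longrightarrow> j \<le> psum d (Suc t) \<Longrightarrow>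
   cnt (\<lambda>i. P (tidx d i)) j = SP d P t + (if P t then j - psum d t else 0) \<and>
   cnt (\<lambda>i. \<not> P (tidx d i)) j = SP d (\<lambda>k. \<not> P k) t + (if P t then 0 else j - psum d t)"
proof (induct j arbitrary: t)
  case 0
  then have "psum d t = 0" by simp
  have "t = 1"
  proof (rule ccontr)
    assume "t \<noteq> 1"
    then have "psum d 1 < psum d t" using 0 by (intro psum_strict) auto
    then show False using \<open>psum d t = 0\<close> by simp
  qed
  then show ?case using d0 by (simp add: SP_def)
next
  case (Suc j)
  show ?case
  proof (cases "psum d t \<le> j")
    case True
    have IH: "cnt (\<lambda>i. P (tidx d i)) j = SP d P t + (if P t then j - psum d t else 0) \<and>
      cnt (\<lambda>i. \<not> P (tidx d i)) j = SP d (\<lambda>k. \<not> P k) t + (if P t then 0 else j - psum d t)"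
      using Suc True by auto
    have "tidx d (Suc j) = t" using Suc True by (intro tidx_unique) auto
    then show ?thesis using IH True by auto
  next
    case False
    then have eq: "psum d t = Suc j" using Suc by simp
    have "t \<noteq> 1" using eq psum1 by auto
    then obtain t' where t': "t = Suc t'" "1 \<le> t'" using Suc by (cases t) auto
    have ps: "psum d t = psum d t' + d ! t'" using t' psum_Suc by simp
    have "1 \<le> d ! t'" using dpos t' Suc by auto
    then have le: "psum d t' \<le> j" using ps eq by simp
    have IH: "cnt (\<lambda>i. P (tidx d i)) j = SP d P t' + (if P t' then j - psum d t' else 0) \<and>
      cnt (\<lambda>i. \<not> P (tidx d i)) j = SP d (\<lambda>k. \<not> P k) t' + (if P t' then 0 else j - psum d t')"
      using Suc le eq t' by auto
    have "tidx d (Suc j) = t'" using Suc t' le eq by (intro tidx_unique) auto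
    then have c1: "cnt (\<lambda>i. P (tidx d i)) (Suc j) = cnt (\<lambda>i. P (tidx d i)) j + (if P t' then 1 else 0)"
      and c2: "cnt (\<lambda>i. \<not> P (tidx d i)) (Suc j) = cnt (\<lambda>i. \<not> P (tidx d i)) j + (if P t' then 0 else 1)"
      by simp_all
    have dd: "d ! t' = Suc j - psum d t'" using ps eq by simp
    show ?thesis unfolding c1 c2 using IH le eq t' SP_Suc[of d P t'] SP_Suc[of d "\<lambda>k. \<not> P k" t'] dd
      by (cases "P t'") auto
  qed
qed

lemma block_j:
  assumes "1 \<le> j" "j \<le> n"
  shows "cnt (\<lambda>i. P (tidx d i)) j = SP d P (tidx d j) + (if P (tidx d j) then j - psum d (tidx d j) else 0) \<and>
   cnt (\<lambda>i. \<not> P (tidx d i)) j = SP d (\<lambda>k. \<not> P k) (tidx d j) + (if P (tidx d j) then 0 else j - psum d (tidx d j))"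
  using tidx_exists[OF assms] assms by (intro block) auto

end

lemma oddsum_SP: "oddsum d t = SP d odd t"
  unfolding oddsum_def SP_def
  by (subst sum.inter_filter[symmetric]) (auto intro!: sum.cong)
lemma evensum_SP: "evensum d t = SP d even t"
  unfolding evensum_def SP_def
  by (subst sum.inter_filter[symmetric]) (auto intro!: sum.cong)

definition sside :: "nat \<times> nat list \<Rightarrow> nat \<Rightarrow> bool" where
  "sside \<eta> j = (if fst \<eta> = 1 then odd (tidx (snd \<eta>) j) else even (tidx (snd \<eta>) j))"

lemma vj_gv:
  assumes "\<eta> \<in> Omega n" "1 \<le> j" "j \<le> n"
  shows "vj j \<eta> = gv (sside \<eta>) j"
proof -
  obtain z d where e: "\<eta> = (z, d)" by (cases \<eta>)
  have z: "z = 0 \<or> z = 1" using assms(1) e by (auto simp: Omega_def)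
  interpret dl d n using assms(1) e by unfold_locales (auto simp: Omega_def)
  show ?thesis
  proof (cases "z = 1")
    case True
    have s: "sside \<eta> = (\<lambda>i. odd (tidx d i))" using True e by (auto simp: sside_def)
    show ?thesis using block_j[OF assms(2,3), of odd] True e
      unfolding s vj_def gv_def by (simp add: oddsum_SP evensum_SP Let_def)
  next
    case False
    then have z0: "z \<noteq> 1" .
    have s: "sside \<eta> = (\<lambda>i. even (tidx d i))" using False e by (auto simp: sside_def)
    show ?thesis using block_j[OF assms(2,3), of even] False e
      unfolding s vj_def gv_def by (simp add: oddsum_SP evensum_SP Let_def)
  qed
qed


lemma gv_part5:
  assumes "1 \<le> j" "gv s j = (0, p)" "1 \<le> q" "q < p"
  shows "\<exists>l. 1 \<le> l \<and> l < j \<and> gv s l = (0, q)"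
proof -
  have ns: "\<not> s j" and pc: "cnt (\<lambda>i. \<not> s i) j = p" using assms unfolding gv_def by (auto split: if_splits)
  obtain i where i: "1 \<le> i" "i \<le> j" "\<not> s i" "cnt (\<lambda>i. \<not> s i) i = q"
    using cnt_ivt[of q "\<lambda>i. \<not> s i" j] assms pc by auto
  have "i \<noteq> j" using i pc assms by auto
  then show ?thesis using i by (intro exI[of _ i]) (auto simp: gv_def)
qed

lemma gv_part5':
  assumes "1 \<le> j" "gv s j = (p, 0)" "1 \<le> q" "q < p"
  shows "\<exists>l. 1 \<le> l \<and> l < j \<and> gv s l = (q, 0)"
proof -
  have ns: "s j" and pc: "cnt s j = p" using assms unfolding gv_def by (auto split: if_splits)
  obtain i where i: "1 \<le> i" "i \<le> j" "s i" "cnt s i = q"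
    using cnt_ivt[of q s j] assms pc by auto
  have "i \<noteq> j" using i pc assms by auto
  then show ?thesis using i by (intro exI[of _ i]) (auto simp: gv_def)
qed

lemma gv_image:
  assumes "1 \<le> j"
  shows "gv s ` {1..j} = {(0, t) | t. 1 \<le> t \<and> t \<le> cnt (\<lambda>i. \<not> s i) j} \<union> {(a, 0) | a. 1 \<le> a \<and> a \<le> cnt s j}"
proof
  show "gv s ` {1..j} \<subseteq> {(0, t) | t. 1 \<le> t \<and> t \<le> cnt (\<lambda>i. \<not> s i) j} \<union> {(a, 0) | a. 1 \<le> a \<and> a \<le> cnt s j}"
  proof
    fix x assume "x \<in> gv s ` {1..j}"
    then obtain i where i: "1 \<le> i" "i \<le> j" "x = gv s i" by auto
    have "cnt s i \<le> cnt s j" "cnt (\<lambda>i. \<not> s i) i \<le> cnt (\<lambda>i. \<not> s i) j" using i cnt_mono by auto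
    moreover have "s i \<Longrightarrow> 1 \<le> cnt s i" "\<not> s i \<Longrightarrow> 1 \<le> cnt (\<lambda>i. \<not> s i) i"
      using cnt_pos[of s i] cnt_pos[of "\<lambda>i. \<not> s i" i] i by auto
    ultimately show "x \<in> {(0, t) | t. 1 \<le> t \<and> t \<le> cnt (\<lambda>i. \<not> s i) j} \<union> {(a, 0) | a. 1 \<le> a \<and> a \<le> cnt s j}"
      using i unfolding gv_def by auto
  qed
next
  show "{(0, t) | t. 1 \<le> t \<and> t \<le> cnt (\<lambda>i. \<not> s i) j} \<union> {(a, 0) | a. 1 \<le> a \<and> a \<le> cnt s j} \<subseteq> gv s ` {1..j}"
  proof
    fix x assume "x \<in> {(0, t) | t. 1 \<le> t \<and> t \<le> cnt (\<lambda>i. \<not> s i) j} \<union> {(a, 0) | a. 1 \<le> a \<and> a \<le> cnt s j}"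
    then consider t where "x = (0, t)" "1 \<le> t" "t \<le> cnt (\<lambda>i. \<not> s i) j"
      | a where "x = (a, 0)" "1 \<le> a" "a \<le> cnt s j" by blast
    then show "x \<in> gv s ` {1..j}"
    proof cases
      case 1
      then obtain i where "1 \<le> i" "i \<le> j" "\<not> s i" "cnt (\<lambda>i. \<not> s i) i = t"
        using cnt_ivt[of t "\<lambda>i. \<not> s i" j] by auto
      then show ?thesis using 1 by (auto simp: gv_def intro!: image_eqI[of _ _ i])
    next
      case 2
      then obtain i where "1 \<le> i" "i \<le> j" "s i" "cnt s i = a"
        using cnt_ivt[of a s j] by auto
      then show ?thesis using 2 by (auto simp: gv_def intro!: image_eqI[of _ _ i])
    qed
  qed
qed

lemma gv_part6:
  assumes "1 \<le> j" "gv s j = (0, l)"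
  shows "gv s ` {1..j} = {(0, t) | t. 1 \<le> t \<and> t \<le> l} \<union> {(a, 0) | a. 1 \<le> a \<and> a \<le> j - l}"
proof -
  have "cnt (\<lambda>i. \<not> s i) j = l" "cnt s j = j - l"
    using assms gv_axis[of j s] cnt_sum[of s j] unfolding gv_def by (auto split: if_splits)
  then show ?thesis using gv_image[OF assms(1), of s] by simp
qed

lemma gv_part6':
  assumes "1 \<le> j" "gv s j = (l, 0)"
  shows "gv s ` {1..j} = {(0, t) | t. 1 \<le> t \<and> t \<le> j - l} \<union> {(a, 0) | a. 1 \<le> a \<and> a \<le> l}"
proof -
  have "cnt s j = l" "cnt (\<lambda>i. \<not> s i) j = j - l"
    using assms gv_axis[of j s] cnt_sum[of s j] unfolding gv_def by (auto split: if_splits)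
  then show ?thesis using gv_image[OF assms(1), of s] by simp
qed

lemma card_Lambda2: "finite (Lambda2 n) \<and> 2 * card (Lambda2 n) = n * (n + 3)"
proof (induct n)
  case 0
  have "Lambda2 0 = {}" by (auto simp: Lambda2_def)
  then show ?case by simp
next
  case (Suc n)
  have eq: "Lambda2 (Suc n) = Lambda2 n \<union> (\<lambda>a. (a, Suc n - a)) ` {0..Suc n}"
    by (auto simp: Lambda2_def image_iff)
  have dis: "Lambda2 n \<inter> (\<lambda>a. (a, Suc n - a)) ` {0..Suc n} = {}" by (auto simp: Lambda2_def)
  have inj: "inj_on (\<lambda>a. (a, Suc n - a)) {0..Suc n}" by (auto simp: inj_on_def)
  have "card (Lambda2 (Suc n)) = card (Lambda2 n) + Suc (Suc n)"
    unfolding eq using Suc dis card_image[OF inj] by (simp add: card_Un_disjoint)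
  then show ?case using Suc eq by (simp add: algebra_simps)
qed

lemma vbar_proj:
  assumes "1 \<le> n" shows "vbar n u (1, 0) = fst u" "vbar n u (0, 1) = snd u"
  using assms by (auto simp: vbar_def Lambda2_def)

lemma sum_rev: "(\<Sum>j\<in>{1..n}. Suc n - j) = (\<Sum>j\<in>{1..n}. j)"
  by (rule sum.reindex_bij_witness[of _ "\<lambda>j. Suc n - j" "\<lambda>j. Suc n - j"]) auto

lemma gauss2: "2 * (\<Sum>j\<in>{1..n}. (j::nat)) = n * (n + 1)"
  by (induct n) (auto simp: atLeastAtMostSuc_conv)

definition key :: "nat \<times> nat \<Rightarrow> nat \<times> nat" where
  "key w = (fst w - snd w, snd w - fst w)"

theorem lemma2p5:
  fixes n :: nat and \<eta> :: "nat \<times> nat list" and u v :: "nat \<times> nat"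
  assumes "1 \<le> n" and "\<eta> \<in> Omega n"
  shows "(u \<noteq> v \<longrightarrow> vbar n u \<noteq> vbar n v)
    \<and> card (vbar n ` Teta n \<eta>) = lambda2 n
    \<and> (\<forall>j l. 1 \<le> j \<and> j \<le> n \<and> (vj j \<eta> = (l, 0) \<or> vj j \<eta> = (0, l)) \<longrightarrow> l \<le> j)
    \<and> (\<forall>w\<in>Teta n \<eta>. fst w \<le> n \<and> snd w \<le> n)
    \<and> (\<forall>j p. 1 \<le> j \<and> j \<le> n \<and> vj j \<eta> = (0, p) \<longrightarrow>
          (\<forall>q. 1 \<le> q \<and> q < p \<longrightarrow> (\<exists>l. 1 \<le> l \<and> l < j \<and> vj l \<eta> = (0, q))))
    \<and> (\<forall>j p. 1 \<le> j \<and> j \<le> n \<and> vj j \<eta> = (p, 0) \<longrightarrow>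
          (\<forall>q. 1 \<le> q \<and> q < p \<longrightarrow> (\<exists>l. 1 \<le> l \<and> l < j \<and> vj l \<eta> = (q, 0))))
    \<and> (\<forall>j l. 1 \<le> j \<and> j \<le> n \<and> vj j \<eta> = (0, l) \<longrightarrow>
          (\<lambda>i. vj i \<eta>) ` {1..j} = {(0, t) | t. 1 \<le> t \<and> t \<le> l} \<union> {(s, 0) | s. 1 \<le> s \<and> s \<le> j - l})
    \<and> (\<forall>j l. 1 \<le> j \<and> j \<le> n \<and> vj j \<eta> = (l, 0) \<longrightarrow>
          (\<lambda>i. vj i \<eta>) ` {1..j} = {(0, t) | t. 1 \<le> t \<and> t \<le> j - l} \<union> {(s, 0) | s. 1 \<le> s \<and> s \<le> l})"
proof -
  define S where "S = sside \<eta>"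
  have V: "\<And>j. 1 \<le> j \<Longrightarrow> j \<le> n \<Longrightarrow> vj j \<eta> = gv S j"
    unfolding S_def using vj_gv[OF assms(2)] by blast
  have inj: "\<And>u v. vbar n u = vbar n v \<Longrightarrow> u = v"
    by (metis vbar_proj[OF assms(1)] prod.collapse)
  have P1: "u \<noteq> v \<longrightarrow> vbar n u \<noteq> vbar n v" using inj by blast
  have P3: "\<forall>j l. 1 \<le> j \<and> j \<le> n \<and> (vj j \<eta> = (l, 0) \<or> vj j \<eta> = (0, l)) \<longrightarrow> l \<le> j"
    using V gv_le by (metis fst_conv snd_conv)
  have Tjimg: "Tj n j \<eta> = (\<lambda>p. (fst (gv S j) + p, snd (gv S j) + p)) ` {0..n - j}"
    if "1 \<le> j" "j \<le> n" for j
    using that V[OF that] by (auto simp: Tj_def)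
  have T0: "Tj n 0 \<eta> = (\<lambda>p. (p, p)) ` {1..n}" by (auto simp: Tj_def)
  have P4: "\<forall>w\<in>Teta n \<eta>. fst w \<le> n \<and> snd w \<le> n"
  proof
    fix w assume "w \<in> Teta n \<eta>"
    then obtain j where j: "j \<le> n" "w \<in> Tj n j \<eta>" by (auto simp: Teta_def)
    show "fst w \<le> n \<and> snd w \<le> n"
    proof (cases "j = 0")
      case True then show ?thesis using j T0 by auto
    next
      case False
      then have "1 \<le> j" by simp
      then show ?thesis using j Tjimg[of j] gv_le[of S j] by auto
    qed
  qed
  have keyT: "key w = gv S j" if "1 \<le> j" "j \<le> n" "w \<in> Tj n j \<eta>" for j w
    using that Tjimg[OF that(1,2)] gv_axis[OF that(1), of S] by (auto simp: key_def prod_eq_iff)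
  have key0: "key w = (0, 0)" if "w \<in> Tj n 0 \<eta>" for w
    using that T0 by (auto simp: key_def)
  have disj: "\<forall>i\<in>{0..n}. \<forall>j\<in>{0..n}. i \<noteq> j \<longrightarrow> Tj n i \<eta> \<inter> Tj n j \<eta> = {}"
  proof (intro ballI impI)
    fix i j assume ij: "i \<in> {0..n}" "j \<in> {0..n}" "i \<noteq> j"
    show "Tj n i \<eta> \<inter> Tj n j \<eta> = {}"
    proof (rule ccontr)
      assume "Tj n i \<eta> \<inter> Tj n j \<eta> \<noteq> {}"
      then obtain w where w: "w \<in> Tj n i \<eta>" "w \<in> Tj n j \<eta>" by blast
      show False
      proof (cases "i = 0")
        case True
        then have "j \<noteq> 0" using ij by auto
        then have "1 \<le> j" "j \<le> n" using ij by auto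
        then have "gv S j = (0, 0)" using key0 keyT[of j w] w True by auto
        then show ?thesis using gv_axis[of j S] \<open>1 \<le> j\<close> by auto
      next
        case False
        note iF = False
        show ?thesis
        proof (cases "j = 0")
          case True
          have "1 \<le> i" "i \<le> n" using ij iF by auto
          then have "gv S i = (0, 0)" using key0 keyT[of i w] w True by auto
          then show ?thesis using gv_axis[of i S] \<open>1 \<le> i\<close> by auto
        next
          case False
          then have "gv S i = gv S j" using keyT[of i w] keyT[of j w] w iF ij by auto
          then show ?thesis using gv_inj[of i j S] iF False ij by auto
        qed
      qed
    qed
  qed
  have fin: "\<forall>j\<in>{0..n}. finite (Tj n j \<eta>)" by (auto simp: Tj_def)
  have cardj: "card (Tj n j \<eta>) = (if j = 0 then n else Suc n - j)" if "j \<le> n" for j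
  proof (cases "j = 0")
    case True then show ?thesis using T0 by (simp add: card_image inj_on_def)
  next
    case False
    then have "card (Tj n j \<eta>) = card {0..n - j}" using Tjimg[of j] that
      by (simp add: card_image inj_on_def)
    then show ?thesis using False that by simp
  qed
  have cT: "card (Teta n \<eta>) = (\<Sum>j\<in>{0..n}. card (Tj n j \<eta>))"
    unfolding Teta_def by (rule card_UN_disjoint[OF _ fin disj]) simp
  also have "\<dots> = (\<Sum>j\<in>{0..n}. (if j = 0 then n else Suc n - j))"
    using cardj by (intro sum.cong) auto
  also have "\<dots> = n + (\<Sum>j\<in>{1..n}. Suc n - j)"
    by (simp add: sum.atLeast_Suc_atMost)
  finally have "2 * card (Teta n \<eta>) = n * (n + 3)"
    using sum_rev[of n] gauss2[of n] by (simp add: algebra_simps)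
  moreover have "card (vbar n ` Teta n \<eta>) = card (Teta n \<eta>)"
    using inj by (intro card_image) (auto simp: inj_on_def)
  ultimately have P2: "card (vbar n ` Teta n \<eta>) = lambda2 n"
    using card_Lambda2[of n] unfolding lambda2_def by simp
  have P5: "\<forall>j p. 1 \<le> j \<and> j \<le> n \<and> vj j \<eta> = (0, p) \<longrightarrow>
          (\<forall>q. 1 \<le> q \<and> q < p \<longrightarrow> (\<exists>l. 1 \<le> l \<and> l < j \<and> vj l \<eta> = (0, q)))"
  proof (intro allI impI)
    fix j p q assume h: "1 \<le> j \<and> j \<le> n \<and> vj j \<eta> = (0, p)" "1 \<le> q \<and> q < p"
    then obtain l where "1 \<le> l \<and> l < j \<and> gv S l = (0, q)" using gv_part5[of j S p q] V by auto
    then show "\<exists>l. 1 \<le> l \<and> l < j \<and> vj l \<eta> = (0, q)" using V h by (metis less_imp_le order_trans)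
  qed
  have P5': "\<forall>j p. 1 \<le> j \<and> j \<le> n \<and> vj j \<eta> = (p, 0) \<longrightarrow>
          (\<forall>q. 1 \<le> q \<and> q < p \<longrightarrow> (\<exists>l. 1 \<le> l \<and> l < j \<and> vj l \<eta> = (q, 0)))"
  proof (intro allI impI)
    fix j p q assume h: "1 \<le> j \<and> j \<le> n \<and> vj j \<eta> = (p, 0)" "1 \<le> q \<and> q < p"
    then obtain l where "1 \<le> l \<and> l < j \<and> gv S l = (q, 0)" using gv_part5'[of j S p q] V by auto
    then show "\<exists>l. 1 \<le> l \<and> l < j \<and> vj l \<eta> = (q, 0)" using V h by (metis less_imp_le order_trans)
  qed
  have img: "(\<lambda>i. vj i \<eta>) ` {1..j} = gv S ` {1..j}" if "j \<le> n" for j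
    using V that by (intro image_cong) auto
  have P6: "\<forall>j l. 1 \<le> j \<and> j \<le> n \<and> vj j \<eta> = (0, l) \<longrightarrow>
          (\<lambda>i. vj i \<eta>) ` {1..j} = {(0, t) | t. 1 \<le> t \<and> t \<le> l} \<union> {(s, 0) | s. 1 \<le> s \<and> s \<le> j - l}"
  proof (intro allI impI)
    fix j l assume h: "1 \<le> j \<and> j \<le> n \<and> vj j \<eta> = (0, l)"
    then have "gv S j = (0, l)" using V by auto
    then show "(\<lambda>i. vj i \<eta>) ` {1..j} = {(0, t) | t. 1 \<le> t \<and> t \<le> l} \<union> {(s, 0) | s. 1 \<le> s \<and> s \<le> j - l}"
      using img[of j] gv_part6[of j S l] h by simp
  qed
  have P6': "\<forall>j l. 1 \<le> j \<and> j \<le> n \<and> vj j \<eta> = (l, 0) \<longrightarrow>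
          (\<lambda>i. vj i \<eta>) ` {1..j} = {(0, t) | t. 1 \<le> t \<and> t \<le> j - l} \<union> {(s, 0) | s. 1 \<le> s \<and> s \<le> l}"
  proof (intro allI impI)
    fix j l assume h: "1 \<le> j \<and> j \<le> n \<and> vj j \<eta> = (l, 0)"
    then have "gv S j = (l, 0)" using V by auto
    then show "(\<lambda>i. vj i \<eta>) ` {1..j} = {(0, t) | t. 1 \<le> t \<and> t \<le> j - l} \<union> {(s, 0) | s. 1 \<le> s \<and> s \<le> l}"
      using img[of j] gv_part6'[of j S l] h by simp
  qed
  show ?thesis using P1 P2 P3 P4 P5 P5' P6 P6' by blast
qed

end
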